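(* Let $G$ be a super edge-magic graph and $n\ge1$. Then for any orientations $\overrightarrow{G}$ of $G$ and $\overrightarrow{K}_{1,n}^l$ of $K_{1,n}^l$, $$|\sigma_{\overrightarrow{G}\otimes\overrightarrow{K}_{1,n}^l}|\ \ge\ (n+1)\,|\sigma_{G}|.$$
   Context: Graphs may have loops and multiple edges. For a $(p,q)$-graph $G$ ($p$ vertices, $q$ edges), an edge-magic labeling is a bijection $f:V(G)\cup E(G)\to[1,p+q]$ such that $f(x)+f(xy)+f(y)$ equals a constant $\mathrm{val}(f)$ (the valence) for every edge $xy$; it is super edge-magic if moreover $f(V(G))=[1,p]$, and $G$ is super edge-magic if it has such a labeling. The super edge-magic set $\sigma_H$ of a graph $H$ is the set of integers that are valences of super edge-magic labelings of $H$; for a digraph, $\sigma$ refers to its underlying graph. $K_{1,n}^l$ is the star $K_{1,n}$ with a loop attached at its central vertex. For digraphs $D$ and $F$, $D\otimes F$ is the digraph with vertex set $V(D)\times V(F)$ and arcs $((a,i),(b,j))$ for every arc $(a,b)$ of $D$ and arc $(i,j)$ of $F$ (loops allowed). *)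

theory Defs
  imports Main "Graph_Theory.Digraph"
begin

text \<open>A (finite) graph with loops and multiple edges is represented by a
  fin_digraph whose arc directions are ignored: an arc e joins tail G e and
  head G e (a loop if they coincide).  Parallel edges are distinct arcs.\<close>

definition sem_labeling ::
  "('v,'e) pre_digraph \<Rightarrow> ('v \<Rightarrow> nat) \<Rightarrow> ('e \<Rightarrow> nat) \<Rightarrow> nat \<Rightarrow> bool" where
  "sem_labeling G fv fe k \<longleftrightarrow>
     bij_betw fv (verts G) {1..card (verts G)} \<and>
     bij_betw fe (arcs G) {card (verts G) + 1 .. card (verts G) + card (arcs G)} \<and>
     (\<forall>e\<in>arcs G. fv (tail G e) + fe e + fv (head G e) = k)"

definition sem_set :: "('v,'e) pre_digraph \<Rightarrow> nat set" where
  "sem_set G = {k. \<exists>fv fe. sem_labeling G fv fe k}"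

definition super_edge_magic :: "('v,'e) pre_digraph \<Rightarrow> bool" where
  "super_edge_magic G \<longleftrightarrow> (\<exists>fv fe k. sem_labeling G fv fe k)"

definition orientation_of :: "('v,'e) pre_digraph \<Rightarrow> ('v,'e) pre_digraph \<Rightarrow> bool" where
  "orientation_of D G \<longleftrightarrow> verts D = verts G \<and> arcs D = arcs G \<and>
     (\<forall>e\<in>arcs G. {tail D e, head D e} = {tail G e, head G e})"

text \<open>K_{1,n}^l: centre 0, leaves 1..n; edge 0 is the loop at the centre,
  edge i (1 \<le> i \<le> n) joins 0 and i.\<close>
definition star_loop :: "nat \<Rightarrow> (nat, nat) pre_digraph" where
  "star_loop n = \<lparr> verts = {0..n}, arcs = {0..n}, tail = (\<lambda>_. 0), head = (\<lambda>i. i) \<rparr>"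

definition otimes :: "('a,'b) pre_digraph \<Rightarrow> ('c,'d) pre_digraph \<Rightarrow> ('a \<times> 'c, 'b \<times> 'd) pre_digraph" where
  "otimes D F = \<lparr> verts = verts D \<times> verts F, arcs = arcs D \<times> arcs F,
     tail = (\<lambda>(e,e'). (tail D e, tail F e')), head = (\<lambda>(e,e'). (head D e, head F e')) \<rparr>"

end

theory Submission
  imports Defs
begin

definition combfun :: "nat \<Rightarrow> nat \<Rightarrow> ('a \<Rightarrow> nat) \<Rightarrow> ('b \<Rightarrow> nat) \<Rightarrow> 'a \<times> 'b \<Rightarrow> nat" where
  "combfun m c g h = (\<lambda>(a,x). (m+1)*(g a - 1 - c) + h x + (m+1)*c + 1)"

lemma divmod_uniq:
  fixes m u u' v v' :: nat
  assumes "v \<le> m" "v' \<le> m" "(m+1)*u + v = (m+1)*u' + v'"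
  shows "u = u' \<and> v = v'"
proof -
  have d1: "((m+1)*u + v) div (m+1) = u" using assms(1)
    by (metis add.commute div_less div_mult_self2 le_imp_less_Suc Suc_eq_plus1 add_0 zero_neq_one add_eq_0_iff_both_eq_0 mult.commute)
  have d2: "((m+1)*u' + v') div (m+1) = u'" using assms(2)
    by (metis add.commute div_less div_mult_self2 le_imp_less_Suc Suc_eq_plus1 add_0 zero_neq_one add_eq_0_iff_both_eq_0 mult.commute)
  have d3: "((m+1)*u + v) mod (m+1) = v" using assms(1)
    by (metis add.commute mod_less mod_mult_self2 le_imp_less_Suc Suc_eq_plus1 mult.commute)
  have d4: "((m+1)*u' + v') mod (m+1) = v'" using assms(2)
    by (metis add.commute mod_less mod_mult_self2 le_imp_less_Suc Suc_eq_plus1 mult.commute)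
  have "u = u'" using d1 d2 assms(3) by argo
  moreover have "v = v'" using d3 d4 assms(3) by argo
  ultimately show ?thesis by blast
qed

lemma combine:
  assumes g: "bij_betw g A {c+1..c+P}" and h: "bij_betw h B {0..m}"
  shows "bij_betw (combfun m c g h) (A \<times> B) {(m+1)*c+1 .. (m+1)*c + P*(m+1)}"
proof -
  have fA: "finite A" using bij_betw_finite[OF g] by simp
  have fB: "finite B" using bij_betw_finite[OF h] by simp
  have cA: "card A = P" using bij_betw_same_card[OF g] by simp
  have cB: "card B = m+1" using bij_betw_same_card[OF h] by simp
  have gr: "\<And>a. a \<in> A \<Longrightarrow> g a \<in> {c+1..c+P}" using bij_betw_apply[OF g] by blast
  have hr: "\<And>x. x \<in> B \<Longrightarrow> h x \<in> {0..m}" using bij_betw_apply[OF h] by blast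
  have inj: "inj_on (combfun m c g h) (A \<times> B)"
  proof (rule inj_onI)
    fix p1 p2 assume p1: "p1 \<in> A \<times> B" and p2: "p2 \<in> A \<times> B" and eq: "combfun m c g h p1 = combfun m c g h p2"
    obtain a x where ax: "p1 = (a,x)" by fastforce
    obtain a' x' where ax': "p2 = (a',x')" by fastforce
    have aA: "a \<in> A" "x \<in> B" "a' \<in> A" "x' \<in> B" using p1 p2 ax ax' by auto
    have "(m+1)*(g a - 1 - c) + h x = (m+1)*(g a' - 1 - c) + h x'"
      using eq ax ax' by (simp add: combfun_def)
    moreover have "h x \<le> m" "h x' \<le> m" using hr aA by auto
    ultimately have "g a - 1 - c = g a' - 1 - c \<and> h x = h x'"
      using divmod_uniq by blast
    moreover have "g a \<ge> c+1" "g a' \<ge> c+1" using gr aA by auto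
    ultimately have "g a = g a'" "h x = h x'" by auto
    then have "a = a'" "x = x'" using g h aA unfolding bij_betw_def inj_on_def by auto
    then show "p1 = p2" using ax ax' by simp
  qed
  have sub: "combfun m c g h ` (A \<times> B) \<subseteq> {(m+1)*c+1 .. (m+1)*c + P*(m+1)}"
  proof
    fix y assume "y \<in> combfun m c g h ` (A \<times> B)"
    then obtain a x where aA: "a \<in> A" "x \<in> B" and y: "y = combfun m c g h (a,x)" by auto
    define u where "u = g a - 1 - c"
    have u: "u + 1 \<le> P" using gr[OF aA(1)] u_def by auto
    have v: "h x \<le> m" using hr[OF aA(2)] by auto
    have "(m+1)*u + h x < (m+1)*(u+1)" using v by simp
    also have "\<dots> \<le> (m+1)*P" using u by (intro mult_le_mono2) 
    finally have "(m+1)*u + h x + 1 \<le> P*(m+1)" by (simp add: mult.commute)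
    then show "y \<in> {(m+1)*c+1 .. (m+1)*c + P*(m+1)}" using y u_def by (simp add: combfun_def)
  qed
  have "card (A \<times> B) = card {(m+1)*c+1 .. (m+1)*c + P*(m+1)}"
    using cA cB by (simp add: card_cartesian_product)
  then have "combfun m c g h ` (A \<times> B) = {(m+1)*c+1 .. (m+1)*c + P*(m+1)}"
    using sub inj by (simp add: card_image card_subset_eq)
  then show ?thesis using inj bij_betw_def by blast
qed

definition swp :: "nat \<Rightarrow> nat \<Rightarrow> nat" where
  "swp j x = (if x = 0 then j else if x = j then 0 else x)"

lemma swp_bij: "j \<le> n \<Longrightarrow> bij_betw (swp j) {0..n} {0..n}"
  by (rule bij_betw_byWitness[where f'="swp j"]) (auto simp: swp_def)

lemma rev_bij: "bij_betw (\<lambda>v. n - v) {0..n::nat} {0..n}"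
  by (rule bij_betw_byWitness[where f'="\<lambda>v. n - v"]) auto

lemma swp_rev_bij: "j \<le> n \<Longrightarrow> bij_betw (\<lambda>i. n - swp j i) {0..n} {0..n}"
  using bij_betw_trans[OF swp_bij rev_bij] by (simp add: comp_def)

lemma sem_set_finite:
  assumes "finite (verts H)" "finite (arcs H)" "e \<in> arcs H"
    "tail H e \<in> verts H" "head H e \<in> verts H"
  shows "finite (sem_set H)"
proof -
  let ?B = "3 * (card (verts H) + card (arcs H))"
  have "sem_set H \<subseteq> {..?B}"
  proof
    fix k assume "k \<in> sem_set H"
    then obtain fv fe where L: "sem_labeling H fv fe k" by (auto simp: sem_set_def)
    have bv: "bij_betw fv (verts H) {1..card (verts H)}" and be: "bij_betw fe (arcs H) {card (verts H) + 1 .. card (verts H) + card (arcs H)}"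
      and kk: "k = fv (tail H e) + fe e + fv (head H e)" using L assms(3) by (auto simp: sem_labeling_def)
    have "fv (tail H e) \<in> {1..card (verts H)}" "fv (head H e) \<in> {1..card (verts H)}"
      using bij_betw_apply[OF bv] assms(4,5) by simp_all
    moreover have "fe e \<in> {card (verts H) + 1 .. card (verts H) + card (arcs H)}"
      using bij_betw_apply[OF be] assms(3) by simp
    moreover note kk
    ultimately show "k \<in> {..?B}" by auto
  qed
  then show ?thesis using finite_subset by blast
qed

theorem mainTheorem6:
  fixes G D :: "('v,'e) pre_digraph" and S :: "(nat, nat) pre_digraph" and n :: nat
  assumes "fin_digraph G"
    and "super_edge_magic G"
    and "n \<ge> 1"
    and "orientation_of D G"
    and "orientation_of S (star_loop n)"
  shows "card (sem_set (otimes D S)) \<ge> (n + 1) * card (sem_set G)"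
proof (cases "arcs G = {}")
  case True
  obtain fv0 fe0 k0 where L0: "sem_labeling G fv0 fe0 k0" using assms(2) super_edge_magic_def by blast
  have "\<And>k. sem_labeling G fv0 fe0 k" using L0 True by (simp add: sem_labeling_def)
  then have "sem_set G = UNIV" by (auto simp: sem_set_def)
  then show ?thesis by simp
next
  case False
  then obtain e0 where e0: "e0 \<in> arcs G" by blast
  interpret fin_digraph G by (rule assms(1))
  define p where "p = card (verts G)"
  define q where "q = card (arcs G)"
  let ?P = "otimes D S"
  have vD: "verts D = verts G" and aD: "arcs D = arcs G"
    and oD: "\<And>e. e \<in> arcs G \<Longrightarrow> {tail D e, head D e} = {tail G e, head G e}"
    using assms(4) by (auto simp: orientation_of_def)
  have vS: "verts S = {0..n}" and aS: "arcs S = {0..n}"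
    and oS: "\<And>i. i \<in> {0..n} \<Longrightarrow> {tail S i, head S i} = {0, i}"
    using assms(5) by (auto simp: orientation_of_def star_loop_def)
  have vP: "verts ?P = verts G \<times> {0..n}" and aP: "arcs ?P = arcs G \<times> {0..n}"
    using vD aD vS aS by (auto simp: otimes_def)
  have cvP: "card (verts ?P) = p*(n+1)" using vP by (simp add: p_def card_cartesian_product)
  have caP: "card (arcs ?P) = q*(n+1)" using aP by (simp add: q_def card_cartesian_product)
  have tlP: "tail ?P (e0,0) \<in> verts ?P" "head ?P (e0,0) \<in> verts ?P"
  proof -
    have "tail D e0 \<in> verts G" "head D e0 \<in> verts G"
      using oD[OF e0] e0 by (metis insert_iff singletonD tail_in_verts head_in_verts)+
    moreover have "tail S 0 \<in> {0..n}" "head S 0 \<in> {0..n}" using oS[of 0] by auto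
    ultimately show "tail ?P (e0,0) \<in> verts ?P" "head ?P (e0,0) \<in> verts ?P"
      using vP by (auto simp: otimes_def)
  qed
  have finP: "finite (sem_set ?P)"
    by (rule sem_set_finite[OF _ _ _ tlP]) (use vP aP e0 in auto)
  have k3: "\<And>k. k \<in> sem_set G \<Longrightarrow> k \<ge> 3"
  proof -
    fix k assume "k \<in> sem_set G"
    then obtain fv fe where L: "sem_labeling G fv fe k" by (auto simp: sem_set_def)
    have bv: "bij_betw fv (verts G) {1..card (verts G)}" and be: "bij_betw fe (arcs G) {card (verts G) + 1 .. card (verts G) + card (arcs G)}"
      and kk: "k = fv (tail G e0) + fe e0 + fv (head G e0)" using L e0 by (auto simp: sem_labeling_def)
    have "fv (tail G e0) \<in> {1..card (verts G)}" "fv (head G e0) \<in> {1..card (verts G)}"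
      using bij_betw_apply[OF bv] e0 by simp_all
    moreover have "fe e0 \<in> {card (verts G) + 1 .. card (verts G) + card (arcs G)}"
      using bij_betw_apply[OF be] e0 by simp
    moreover note kk
    ultimately show "k \<ge> 3" by auto
  qed
  define V where "V = (\<lambda>(k,j). (n+1)*(k-3) + j + n + 3)"
  have mem: "V (k,j) \<in> sem_set ?P" if kin: "k \<in> sem_set G" and jn: "j \<in> {0..n}" for k j
  proof -
    obtain fv fe where L: "sem_labeling G fv fe k" using kin by (auto simp: sem_set_def)
    have bv: "bij_betw fv (verts G) {0+1..0+p}" and be: "bij_betw fe (arcs G) {p+1..p+q}"
      and val: "\<And>e. e \<in> arcs G \<Longrightarrow> fv (tail G e) + fe e + fv (head G e) = k"
      using L by (auto simp: sem_labeling_def p_def q_def)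
    have jn': "j \<le> n" using jn by simp
    define FV where "FV = combfun n 0 fv (swp j)"
    define FE where "FE = combfun n p fe (\<lambda>i. n - swp j i)"
    have BV: "bij_betw FV (verts ?P) {1..card (verts ?P)}"
      using combine[OF bv swp_bij[OF jn']] vP cvP by (simp add: FV_def)
    have BE0: "bij_betw FE (arcs ?P) {(n+1)*p+1 .. (n+1)*p + q*(n+1)}"
      using combine[OF be swp_rev_bij[OF jn']] aP by (simp add: FE_def)
    have eqs: "{(n+1)*p+1 .. (n+1)*p + q*(n+1)} = {card (verts ?P) + 1 .. card (verts ?P) + card (arcs ?P)}"
      using cvP caP by (simp add: mult.commute)
    have BE: "bij_betw FE (arcs ?P) {card (verts ?P) + 1 .. card (verts ?P) + card (arcs ?P)}"
      using BE0 unfolding eqs .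
    have VAL: "FV (tail ?P a) + FE a + FV (head ?P a) = V (k,j)" if ain: "a \<in> arcs ?P" for a
    proof -
      obtain e i where a: "a = (e,i)" by fastforce
      have ei: "e \<in> arcs G" "i \<in> {0..n}" using ain a aP by auto
      have tG: "tail G e \<in> verts G" "head G e \<in> verts G" using ei by auto
      have sumD: "fv (tail D e) + fv (head D e) = fv (tail G e) + fv (head G e)"
        using oD[OF ei(1)] by (auto simp: doubleton_eq_iff)
      have sumS: "swp j (tail S i) + swp j (head S i) = j + swp j i"
      proof -
        have "tail S i = 0 \<and> head S i = i \<or> tail S i = i \<and> head S i = 0"
          using oS[OF ei(2)] by (simp add: doubleton_eq_iff)
        moreover have "swp j 0 = j" by (simp add: swp_def)
        ultimately show ?thesis by auto
      qed
      have tDin: "fv (tail D e) \<ge> 1" "fv (head D e) \<ge> 1"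
      proof -
        have "tail D e \<in> verts G" "head D e \<in> verts G"
          using oD[OF ei(1)] tG by (metis insert_iff singletonD)+
        then show "fv (tail D e) \<ge> 1" "fv (head D e) \<ge> 1" using bij_betw_apply[OF bv] by fastforce+
      qed
      have fe1: "fe e \<ge> p+1" using bij_betw_apply[OF be] ei(1) by fastforce
      have sj: "swp j i \<le> n" using bij_betw_apply[OF swp_bij[OF jn']] ei(2) by fastforce
      define x where "x = fv (tail D e) - 1"
      define y where "y = fv (head D e) - 1"
      define z where "z = fe e - p - 1"
      have xyz: "fv (tail D e) = x + 1" "fv (head D e) = y + 1" "fe e = z + p + 1"
        using tDin fe1 unfolding x_def y_def z_def by simp_all
      obtain t1 t2 where tt: "swp j (tail S i) = t1" "swp j (head S i) = t2" by blast
      have kk: "k = x + y + z + p + 3" using val[OF ei(1)] sumD xyz by simp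
      have "FV (tail ?P a) + FE a + FV (head ?P a)
          = (n+1)*x + t1 + 1 + ((n+1)*z + (n - swp j i) + (n+1)*p + 1) + ((n+1)*y + t2 + 1)"
        using a xyz tt by (simp add: otimes_def FV_def FE_def combfun_def)
      also have "\<dots> = (n+1)*(x+y+z+p) + (t1 + t2) + (n - swp j i) + 3"
        by (simp add: algebra_simps)
      also have "\<dots> = (n+1)*(x+y+z+p) + j + n + 3"
        using sumS tt sj by simp
      also have "\<dots> = V (k,j)" using kk by (simp add: V_def)
      finally show ?thesis .
    qed
    have "sem_labeling ?P FV FE (V (k,j))"
      unfolding sem_labeling_def using BV BE VAL by blast
    then show ?thesis by (auto simp: sem_set_def)
  qed
  have injV: "inj_on V (sem_set G \<times> {0..n})"
  proof (rule inj_onI)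
    fix x y assume x: "x \<in> sem_set G \<times> {0..n}" and y: "y \<in> sem_set G \<times> {0..n}" and eq: "V x = V y"
    obtain k j where kj: "x = (k,j)" by fastforce
    obtain k' j' where kj': "y = (k',j')" by fastforce
    have "(n+1)*(k-3) + j = (n+1)*(k'-3) + j'" using eq kj kj' by (simp add: V_def)
    moreover have "j \<le> n" "j' \<le> n" using x y kj kj' by auto
    ultimately have "k - 3 = k' - 3 \<and> j = j'" using divmod_uniq by blast
    moreover have "k \<ge> 3" "k' \<ge> 3" using k3 x y kj kj' by auto
    ultimately show "x = y" using kj kj' by auto
  qed
  have "card (sem_set G \<times> {0..n}) \<le> card (sem_set ?P)"
  proof (rule card_inj_on_le[OF injV _ finP])
    show "V ` (sem_set G \<times> {0..n}) \<subseteq> sem_set ?P" using mem by auto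
  qed
  then show ?thesis by (simp add: card_cartesian_product mult.commute)
qed

end
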